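(* Let $X\ge 0$ be a random variable with an absolutely continuous distribution $P_X$ whose ordinary moments $\mu_n=\mathbb{E}[X^n]$ are finite for all $n\in\mathbb{N}$, and suppose that for some $q_0\in(0,1]$ $$\limsup_{n\to\infty}\frac{\ln\mu_n}{n^2}=\frac{\ln(1/q_0)}{2}.$$ Then $P_X$ is $q$-moment determinate for every $q\in(0,q_0)$. In particular, if $\limsup_{n\to\infty}\frac{\ln\mu_n}{n^2}=0$, then $P_X$ is $q$-moment determinate for every $q\in(0,1)$.
   Context: For $0<q<1$: the Jackson $q$-integral is $\int_0^a g(t)\,d_qt=a(1-q)\sum_{j=0}^\infty g(aq^j)q^j$ for $a>0$, and $\int_0^\infty g(t)\,d_qt=(1-q)\sum_{j\in\mathbb{Z}}g(q^j)q^j$. A function $f$ on $(0,\infty)$ is a $q$-density of $X$ (with distribution function $F_X$) if $F_X(x)=\int_0^x f(t)\,d_qt$ for all $x>0$; for a non-negative $X$ with $F_X$ continuous at $0$ (in particular for absolutely continuous $P_X$) a $q$-density exists, namely $f(t)=\frac{F_X(t)-F_X(qt)}{t(1-q)}$. The $n$-th $q$-moment is $m_q(n;X)=\int_0^\infty t^nf(t)\,d_qt=(1-q)\sum_{j\in\mathbb{Z}}q^{j(n+1)}f(q^j)$. Write $f\sim g$ iff $f(q^j)=g(q^j)$ for all $j\in\mathbb{Z}$. $P_X$ (with $q$-density $f$ and finite $q$-moments of all orders) is $q$-moment determinate if every random variable $Y$ with $q$-density $g$ and $m_q(k;Y)=m_q(k;X)$ for all $k\in\mathbb{N}_0$ satisfies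 $f\sim g$. *)

theory Defs
  imports "HOL-Probability.Probability"
begin

definition distr_fun :: "real measure \<Rightarrow> real \<Rightarrow> real" where
  "distr_fun P x = measure P {..x}"

definition jackson_int_has :: "real \<Rightarrow> (real \<Rightarrow> real) \<Rightarrow> real \<Rightarrow> real \<Rightarrow> bool" where
  "jackson_int_has q g a I \<longleftrightarrow> (\<lambda>j::nat. a * (1 - q) * (g (a * q ^ j) * q ^ j)) sums I"

definition q_density :: "real \<Rightarrow> real measure \<Rightarrow> (real \<Rightarrow> real) \<Rightarrow> bool" where
  "q_density q P f \<longleftrightarrow> (\<forall>x>0. jackson_int_has q f x (distr_fun P x))"

definition q_moment_has :: "real \<Rightarrow> (real \<Rightarrow> real) \<Rightarrow> nat \<Rightarrow> real \<Rightarrow> bool" where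
  "q_moment_has q f n m \<longleftrightarrow>
     ((\<lambda>j::int. (1 - q) * (q powi (j * (int n + 1)) * f (q powi j))) has_sum m) UNIV"

definition q_moment :: "real \<Rightarrow> (real \<Rightarrow> real) \<Rightarrow> nat \<Rightarrow> real" where
  "q_moment q f n = (\<Sum>\<^sub>\<infinity>j::int. (1 - q) * (q powi (j * (int n + 1)) * f (q powi j)))"

definition q_moments_finite :: "real \<Rightarrow> (real \<Rightarrow> real) \<Rightarrow> bool" where
  "q_moments_finite q f \<longleftrightarrow> (\<forall>n. \<exists>m. q_moment_has q f n m)"

definition q_moment_determinate :: "real \<Rightarrow> real measure \<Rightarrow> bool" where
  "q_moment_determinate q P \<longleftrightarrow>
     (\<exists>f. q_density q P f \<and> q_moments_finite q f \<and>
        (\<forall>(Q::real measure) g. prob_space Q \<and> sets Q = sets borel \<and> q_density q Q g \<and>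
            (\<forall>k. q_moment_has q g k (q_moment q f k))
          \<longrightarrow> (\<forall>j::int. f (q powi j) = g (q powi j))))"

end

theory Submission
  imports Defs
begin


lemma has_sum_diff':
  fixes f g :: "'a \<Rightarrow> real"
  assumes "(f has_sum a) A" "(g has_sum b) A"
  shows "((\<lambda>x. f x - g x) has_sum (a - b)) A"
proof -
  have "((\<lambda>x. - g x) has_sum (- b)) A" using assms(2) by (simp add: has_sum_uminus)
  from has_sum_add[OF assms(1) this] show ?thesis by simp
qed

lemma exp_quad_tendsto:
  fixes g d e :: real
  assumes "g < 0"
  shows "(\<lambda>n::nat. exp (g * real n ^ 2 + d * real n + e)) \<longlonglongrightarrow> 0"
proof -
  define K where "K = (\<bar>d\<bar> + 1 + \<bar>e\<bar>) / (- g)"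
  have ev: "eventually (\<lambda>n::nat. real n \<ge> max K 1) sequentially"
    using filterlim_real_sequentially unfolding filterlim_at_top by blast
  have ev2: "eventually (\<lambda>n::nat. exp (g * real n ^ 2 + d * real n + e) \<le> exp (- real n)) sequentially"
    using ev
  proof eventually_elim
    case (elim n)
    have "K * (-g) = \<bar>d\<bar> + 1 + \<bar>e\<bar>" unfolding K_def using assms by simp
    moreover have "real n * (-g) \<ge> K * (-g)" using elim assms by (intro mult_right_mono) auto
    ultimately have h: "g * real n \<le> - (\<bar>d\<bar> + 1 + \<bar>e\<bar>)" by (simp add: algebra_simps)
    have "g * real n ^ 2 = (g * real n) * real n" by (simp add: power2_eq_square)
    also have "\<dots> \<le> - (\<bar>d\<bar> + 1 + \<bar>e\<bar>) * real n" using h by (intro mult_right_mono) auto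
    finally have h2: "g * real n ^ 2 \<le> - (\<bar>d\<bar> + 1 + \<bar>e\<bar>) * real n" .
    have h3: "d * real n \<le> \<bar>d\<bar> * real n" by (intro mult_right_mono) auto
    have h4: "\<bar>e\<bar> * 1 \<le> \<bar>e\<bar> * real n" using elim by (intro mult_left_mono) auto
    have h5: "- (\<bar>d\<bar> + 1 + \<bar>e\<bar>) * real n = - (\<bar>d\<bar> * real n) - real n - \<bar>e\<bar> * real n"
      by (simp add: algebra_simps)
    have "g * real n ^ 2 + d * real n + e \<le> - real n"
      using h2 h3 h4 h5 abs_ge_self[of e] by linarith
    then show ?case by simp
  qed
  have lim2: "(\<lambda>n::nat. exp (- real n)) \<longlonglongrightarrow> 0"
    by (rule filterlim_compose[OF exp_at_bot]) (simp add: filterlim_uminus_at_bot filterlim_real_sequentially)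
  show ?thesis
    by (rule tendsto_sandwich[OF _ ev2 _ lim2]) auto
qed



lemma pp_has_sum_zero:
  fixes d xx :: "int \<Rightarrow> real" and c :: "nat \<Rightarrow> real"
  assumes "\<And>n. ((\<lambda>j. d j * xx j ^ n) has_sum 0) UNIV"
  shows "((\<lambda>j. d j * (xx j ^ M * (\<Prod>k<N. 1 - xx j * c k))) has_sum 0) UNIV"
proof (induction N arbitrary: M)
  case 0
  then show ?case using assms by simp
next
  case (Suc N)
  have "((\<lambda>j. d j * (xx j ^ M * (\<Prod>k<N. 1 - xx j * c k)) - c N * (d j * (xx j ^ Suc M * (\<Prod>k<N. 1 - xx j * c k)))) has_sum (0 - c N * 0)) UNIV"
    by (intro has_sum_diff' has_sum_cmult_right Suc)
  then show ?case
    by (simp add: algebra_simps)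
qed

lemma factor_lower:
  fixes q y :: real
  assumes "0 \<le> y" "y \<le> q" "q < 1"
  shows "exp (- y / (1 - q)) \<le> 1 - y"
proof -
  have "1 + y / (1 - y) \<le> exp (y / (1 - y))" by (rule exp_ge_add_one_self)
  moreover have "1 + y / (1 - y) = 1 / (1 - y)" using assms by (simp add: field_simps)
  ultimately have "exp (- (y / (1 - y))) \<le> 1 - y"
    using assms by (simp add: exp_minus field_simps)
  moreover have "y / (1 - y) \<le> y / (1 - q)"
    using assms by (intro divide_left_mono) auto
  ultimately have "exp (- (y / (1 - q))) \<le> 1 - y"
    by (meson exp_le_cancel_iff neg_le_iff_le order_trans)
  then show ?thesis by simp
qed

lemma prod_lower:
  fixes q :: real
  assumes "0 < q" "q < 1"
  shows "exp (- 1 / (1 - q)^2) \<le> (\<Prod>k<N. 1 - q ^ Suc k)"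
proof -
  have "exp (- (\<Sum>k<N. q ^ Suc k) / (1 - q)) \<le> (\<Prod>k<N. 1 - q ^ Suc k)"
  proof (induction N)
    case 0
    then show ?case by simp
  next
    case (Suc N)
    have f: "exp (- (q ^ Suc N) / (1 - q)) \<le> 1 - q ^ Suc N"
      using assms by (intro factor_lower) (auto simp: power_le_one mult_left_le_one_le)
    have "exp (- (\<Sum>k<Suc N. q ^ Suc k) / (1 - q)) = exp (- (\<Sum>k<N. q ^ Suc k) / (1 - q)) * exp (- (q ^ Suc N) / (1 - q))"
      by (simp add: exp_add[symmetric] diff_divide_distrib add_divide_distrib)
    also have "\<dots> \<le> (\<Prod>k<N. 1 - q ^ Suc k) * (1 - q ^ Suc N)"
      using Suc f order_trans[OF less_imp_le[OF exp_gt_zero] Suc] by (intro mult_mono) auto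
    finally show ?case by simp
  qed
  moreover have "(\<Sum>k<N. q ^ Suc k) \<le> 1 / (1 - q)"
  proof -
    have "(\<Sum>k<N. q ^ Suc k) \<le> (\<Sum>k<N. q ^ k)"
      using assms by (intro sum_mono) (auto simp: mult_left_le_one_le)
    also have "\<dots> = (1 - q ^ N) / (1 - q)" using assms by (simp add: sum_gp_strict)
    also have "\<dots> \<le> 1 / (1 - q)" using assms by (intro divide_right_mono) auto
    finally show ?thesis .
  qed
  then have "- 1 / (1 - q)^2 \<le> - (\<Sum>k<N. q ^ Suc k) / (1 - q)"
  proof -
    have "(\<Sum>k<N. q ^ Suc k) / (1 - q) \<le> (1 / (1 - q)) / (1 - q)"
      using \<open>(\<Sum>k<N. q ^ Suc k) \<le> 1 / (1 - q)\<close> assms by (intro divide_right_mono) auto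
    also have "\<dots> = 1 / (1 - q)^2" by (simp add: power2_eq_square)
    finally show ?thesis by simp
  qed
  ultimately show ?thesis
    by (meson exp_le_cancel_iff order_trans)
qed

lemma prod_C:
  fixes q :: real and j0 :: int
  assumes "0 < q"
  shows "(\<Prod>k<N. q powi (int k + 1 - j0)) = q powr (real N * (real N + 1) / 2 - real N * of_int j0)"
proof (induction N)
  case 0
  then show ?case using assms by simp
next
  case (Suc N)
  have "(\<Prod>k<Suc N. q powi (int k + 1 - j0)) = q powr (real N * (real N + 1) / 2 - real N * of_int j0) * q powr (of_int (int N + 1 - j0))"
  proof -
    have "q powi (int N + 1 - j0) = q powr of_int (int N + 1 - j0)"
      using assms by (intro powr_real_of_int'[symmetric]) auto
    then show ?thesis using Suc by simp
  qed
  also have "\<dots> = q powr (real N * (real N + 1) / 2 - real N * of_int j0 + of_int (int N + 1 - j0))"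
    by (simp add: powr_add)
  also have "real N * (real N + 1) / 2 - real N * of_int j0 + of_int (int N + 1 - j0) = real (Suc N) * (real (Suc N) + 1) / 2 - real (Suc N) * of_int j0"
    by (simp add: algebra_simps add_divide_distrib)
  finally show ?case .
qed



lemma qpowi_pos_exp_le1:
  fixes q :: real assumes "0 < q" "q < 1" "0 \<le> e"
  shows "q powi e \<le> 1" "0 < q powi e"
  using assms by (auto simp: power_int_def power_le_one)

lemma qpowi_neg_exp_ge1:
  fixes q :: real assumes "0 < q" "q < 1" "e < 0"
  shows "1 \<le> q powi e"
proof -
  have "q ^ nat (- e) \<le> 1" using assms by (intro power_le_one) auto
  moreover have "0 < q ^ nat (- e)" using assms by simp
  ultimately show ?thesis using assms by (simp add: power_int_def one_le_inverse)
qed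

lemma pp_bound:
  fixes q :: real and j j0 :: int and N M :: nat
  assumes q: "0 < q" "q < 1" and "j \<noteq> j0"
  shows "\<bar>(q powi j) ^ M * (\<Prod>k<N. 1 - q powi j * q powi (int k + 1 - j0))\<bar>
     \<le> (q powi (j0 + 1)) ^ M + (\<Prod>k<N. q powi (int k + 1 - j0)) * (q powi j) ^ (M + N)"
proof -
  have xc: "q powi j * q powi (int k + 1 - j0) = q powi (j + int k + 1 - j0)" for k
    using q by (simp flip: power_int_add add: algebra_simps)
  have xpos: "0 < q powi j" using q by simp
  have Cnn: "0 \<le> (\<Prod>k<N. q powi (int k + 1 - j0))" using q by (intro prod_nonneg) simp
  have rhs_nn: "0 \<le> (q powi (j0 + 1)) ^ M + (\<Prod>k<N. q powi (int k + 1 - j0)) * (q powi j) ^ (M + N)"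
    using Cnn xpos q by simp
  consider "j > j0" | "j0 - int N \<le> j \<and> j < j0" | "j < j0 - int N" using assms by linarith
  then show ?thesis
  proof cases
    case 1
    have "\<bar>\<Prod>k<N. 1 - q powi j * q powi (int k + 1 - j0)\<bar> \<le> 1"
    proof -
      have "(\<Prod>k<N. 1 - q powi j * q powi (int k + 1 - j0)) \<le> 1"
        using 1 q by (intro prod_le_1) (auto simp: xc qpowi_pos_exp_le1 less_imp_le)
      moreover have "0 \<le> (\<Prod>k<N. 1 - q powi j * q powi (int k + 1 - j0))"
        using 1 q by (intro prod_nonneg) (auto simp: xc qpowi_pos_exp_le1)
      ultimately show ?thesis by simp
    qed
    then have "\<bar>(q powi j) ^ M * (\<Prod>k<N. 1 - q powi j * q powi (int k + 1 - j0))\<bar> \<le> (q powi j) ^ M"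
      using xpos by (simp add: abs_mult mult_left_le)
    also have "\<dots> \<le> (q powi (j0 + 1)) ^ M"
      using 1 q xpos by (intro power_mono power_int_decreasing) auto
    moreover have "0 \<le> (\<Prod>k<N. q powi (int k + 1 - j0)) * (q powi j) ^ (M + N)"
      using Cnn xpos by simp
    ultimately show ?thesis by linarith
  next
    case 2
    have P0: "(\<Prod>k<N. 1 - q powi j * q powi (int k + 1 - j0)) = 0"
    proof (rule prod_zero)
      show "\<exists>a\<in>{..<N}. 1 - q powi j * q powi (int a + 1 - j0) = 0"
      proof (intro bexI[of _ "nat (j0 - j - 1)"])
        have "j + int (nat (j0 - j - 1)) + 1 - j0 = 0" using 2 by simp
        then show "1 - q powi j * q powi (int (nat (j0 - j - 1)) + 1 - j0) = 0"
          unfolding xc by simp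
      qed (use 2 in auto)
    qed simp
    show ?thesis using rhs_nn by (simp only: P0 mult_zero_right abs_zero)
  next
    case 3
    let ?f = "\<lambda>k. 1 - q powi j * q powi (int k + 1 - j0)"
    let ?C = "\<Prod>k<N. q powi (int k + 1 - j0)"
    have ab: "\<bar>prod ?f {..<n}\<bar> = (\<Prod>k<n. \<bar>?f k\<bar>)" for n
      by (induction n) (simp_all add: abs_mult)
    have pm: "(\<Prod>k<N. \<bar>?f k\<bar>) \<le> (\<Prod>k<N. q powi j * q powi (int k + 1 - j0))"
    proof (rule prod_mono)
      fix k assume "k \<in> {..<N}"
      then have "1 \<le> q powi (j + int k + 1 - j0)" using 3 q by (intro qpowi_neg_exp_ge1) auto
      then show "0 \<le> \<bar>?f k\<bar> \<and> \<bar>?f k\<bar> \<le> q powi j * q powi (int k + 1 - j0)"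
        by (simp add: xc)
    qed
    have pd: "(\<Prod>k<N. q powi j * q powi (int k + 1 - j0)) = (q powi j) ^ N * ?C"
      by (simp only: prod.distrib prod_constant card_lessThan)
    have A1: "\<bar>prod ?f {..<N}\<bar> \<le> (q powi j) ^ N * ?C"
      using ab[of N] pm pd by simp
    have "\<bar>(q powi j) ^ M * prod ?f {..<N}\<bar> = (q powi j) ^ M * \<bar>prod ?f {..<N}\<bar>"
      using xpos by (simp add: abs_mult)
    also have "\<dots> \<le> (q powi j) ^ M * ((q powi j) ^ N * ?C)"
      by (rule mult_left_mono[OF A1]) (use xpos in simp)
    also have "\<dots> = ?C * (q powi j) ^ (M + N)"
      by (simp only: power_add mult_ac)
    finally have "\<bar>(q powi j) ^ M * prod ?f {..<N}\<bar> \<le> ?C * (q powi j) ^ (M + N)" .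
    moreover have "0 \<le> (q powi (j0 + 1)) ^ M" using q by simp
    ultimately show ?thesis by linarith
  qed
qed



lemma core:
  fixes a b :: "int \<Rightarrow> real" and s :: "nat \<Rightarrow> real" and q :: real and j0 :: int
  assumes q: "0 < q" "q < 1"
    and apos: "\<And>j. 0 \<le> a j" and bpos: "\<And>j. 0 \<le> b j"
    and ha: "\<And>n. ((\<lambda>j. a j * (q powi j) ^ n) has_sum s n) UNIV"
    and hb: "\<And>n. ((\<lambda>j. b j * (q powi j) ^ n) has_sum s n) UNIV"
    and cond: "\<And>u v. (\<lambda>n. s n * q powr (real n ^ 2 / 2 + u * real n + v)) \<longlonglongrightarrow> 0"
  shows "a j0 = b j0"
proof -
  define x where "x j = q powi j" for j
  define d where "d j = a j - b j" for j
  define C where "C N = (\<Prod>k<N. q powi (int k + 1 - j0))" for N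
  define P where "P N = (\<Prod>k<N. 1 - q ^ Suc k)" for N
  define c0 where "c0 = exp (- 1 / (1 - q)^2)"
  have c0pos: "0 < c0" unfolding c0_def by simp
  have Pge: "c0 \<le> P N" for N unfolding c0_def P_def using prod_lower[OF q] .
  have xpos: "0 < x j" for j unfolding x_def using q by simp
  have Cnn: "0 \<le> C N" for N unfolding C_def using q by (intro prod_nonneg) simp
  have dz: "((\<lambda>j. d j * x j ^ n) has_sum 0) UNIV" for n
    using has_sum_diff'[OF ha[of n] hb[of n]] by (simp add: d_def x_def algebra_simps)
  have key: "\<bar>d j0\<bar> * x j0 ^ M * P N \<le> 2 * s 0 * x (j0+1) ^ M + 2 * C N * s (M+N)" for N M
  proof -
    define pp where "pp j = x j ^ M * (\<Prod>k<N. 1 - x j * q powi (int k + 1 - j0))" for j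
    have hs: "((\<lambda>j. d j * pp j) has_sum 0) UNIV"
      unfolding pp_def by (rule pp_has_sum_zero[OF dz])
    have single: "((\<lambda>j. if j = j0 then d j0 * pp j0 else 0) has_sum (d j0 * pp j0)) UNIV"
    proof -
      have "((\<lambda>j. if j = j0 then d j0 * pp j0 else 0) has_sum (d j0 * pp j0)) {j0}"
        using has_sum_finite[of "{j0}" "\<lambda>j. if j = j0 then d j0 * pp j0 else 0"] by simp
      then show ?thesis
        by (subst (asm) has_sum_cong_neutral[where T=UNIV and g="\<lambda>j. if j = j0 then d j0 * pp j0 else 0"]) auto
    qed
    define e where "e j = (if j = j0 then 0 else d j * pp j)" for j
    have he: "(e has_sum (- (d j0 * pp j0))) UNIV"
    proof -
      have "((\<lambda>j. d j * pp j - (if j = j0 then d j0 * pp j0 else 0)) has_sum (0 - d j0 * pp j0)) UNIV"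
        by (rule has_sum_diff'[OF hs single])
      moreover have "(\<lambda>j. d j * pp j - (if j = j0 then d j0 * pp j0 else 0)) = e"
        by (auto simp: e_def)
      ultimately show ?thesis by simp
    qed
    define H where "H = 2 * s 0 * x (j0+1) ^ M + 2 * C N * s (M+N)"
    define h where "h j = (a j + b j) * (x (j0+1) ^ M + C N * x j ^ (M+N))" for j
    have hh: "(h has_sum H) UNIV"
    proof -
      have 1: "((\<lambda>j. a j + b j) has_sum (s 0 + s 0)) UNIV"
        using has_sum_add[OF ha[of 0] hb[of 0]] by simp
      have 2: "((\<lambda>j. a j * x j ^ (M+N) + b j * x j ^ (M+N)) has_sum (s (M+N) + s (M+N))) UNIV"
        using has_sum_add[OF ha[of "M+N"] hb[of "M+N"]] by (simp add: x_def)
      have "((\<lambda>j. x (j0+1) ^ M * (a j + b j) + C N * (a j * x j ^ (M+N) + b j * x j ^ (M+N)))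
          has_sum (x (j0+1) ^ M * (s 0 + s 0) + C N * (s (M+N) + s (M+N)))) UNIV"
        by (intro has_sum_add has_sum_cmult_right 1 2)
      moreover have "(\<lambda>j. x (j0+1) ^ M * (a j + b j) + C N * (a j * x j ^ (M+N) + b j * x j ^ (M+N))) = h"
        by (auto simp: h_def algebra_simps)
      ultimately show ?thesis by (simp add: H_def algebra_simps)
    qed
    have hnn: "0 \<le> h j" for j
      unfolding h_def using apos[of j] bpos[of j] xpos[of "j0+1"] xpos[of j] Cnn[of N]
      by (intro mult_nonneg_nonneg add_nonneg_nonneg) auto
    have bound: "\<bar>e j\<bar> \<le> h j" for j
    proof (cases "j = j0")
      case True then show ?thesis using hnn[of j] by (simp add: e_def)
    next
      case False
      have pb: "\<bar>pp j\<bar> \<le> x (j0+1) ^ M + C N * x j ^ (M+N)"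
        unfolding pp_def x_def C_def by (rule pp_bound[OF q False])
      have db: "\<bar>d j\<bar> \<le> a j + b j" using apos[of j] bpos[of j] by (simp add: d_def)
      have "\<bar>e j\<bar> = \<bar>d j\<bar> * \<bar>pp j\<bar>" using False by (simp add: e_def abs_mult)
      also have "\<dots> \<le> (a j + b j) * (x (j0+1) ^ M + C N * x j ^ (M+N))"
        using apos[of j] bpos[of j] by (intro mult_mono pb db) auto
      finally show ?thesis by (simp add: h_def)
    qed
    have u1: "- (d j0 * pp j0) \<le> H"
      using has_sum_mono[OF he hh] bound by (meson abs_le_D1)
    have "((\<lambda>j. - e j) has_sum (d j0 * pp j0)) UNIV" using he by (simp add: has_sum_uminus)
    then have u2: "d j0 * pp j0 \<le> H"
      using has_sum_mono[OF _ hh] bound by (meson abs_le_D2)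
    have ppj0: "pp j0 = x j0 ^ M * P N"
    proof -
      have "x j0 * q powi (int k + 1 - j0) = q ^ Suc k" for k
      proof -
        have "x j0 * q powi (int k + 1 - j0) = q powi (j0 + (int k + 1 - j0))"
          unfolding x_def using q by (subst power_int_add) auto
        also have "\<dots> = q powi (int (Suc k))" by (simp add: add.commute)
        finally show ?thesis by (simp only: power_int_of_nat)
      qed
      then show ?thesis unfolding pp_def P_def by simp
    qed
    have "\<bar>d j0 * pp j0\<bar> \<le> H" using u1 u2 by linarith
    moreover have "\<bar>d j0 * pp j0\<bar> = \<bar>d j0\<bar> * x j0 ^ M * P N"
      using ppj0 xpos[of j0] Pge[of N] c0pos by (simp add: abs_mult)
    ultimately show ?thesis by (simp add: H_def)
  qed
  have lim1: "(\<lambda>N. C N * s (M+N)) \<longlonglongrightarrow> 0" for M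
  proof -
    define u where "u = 1/2 - of_int j0 - real M"
    define v where "v = - real M * u - real M ^ 2 / 2"
    have "(\<lambda>n. s (n + M) * q powr (real (n + M) ^ 2 / 2 + u * real (n + M) + v)) \<longlonglongrightarrow> 0"
      using LIMSEQ_ignore_initial_segment[OF cond[of u v], of M] .
    moreover have "s (N + M) * q powr (real (N + M) ^ 2 / 2 + u * real (N + M) + v) = C N * s (M+N)" for N
    proof -
      have "real (N + M) ^ 2 / 2 + u * real (N + M) + v = real N * (real N + 1) / 2 - real N * of_int j0"
        unfolding u_def v_def by (simp add: power2_eq_square algebra_simps add_divide_distrib diff_divide_distrib)
      then show ?thesis unfolding C_def using prod_C[OF q(1)] by (simp add: add.commute)
    qed
    ultimately show ?thesis by simp
  qed
  have step2: "\<bar>d j0\<bar> * c0 \<le> 2 * s 0 * q ^ M" for M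
  proof -
    have "(\<lambda>N. 2 * s 0 * x (j0+1) ^ M + 2 * C N * s (M+N)) \<longlonglongrightarrow> 2 * s 0 * x (j0+1) ^ M + 2 * 0"
    proof -
      have "(\<lambda>N. 2 * (C N * s (M+N))) \<longlonglongrightarrow> 2 * 0" using lim1[of M] by (rule tendsto_mult_left)
      then have "(\<lambda>N. 2 * s 0 * x (j0+1) ^ M + 2 * (C N * s (M+N))) \<longlonglongrightarrow> 2 * s 0 * x (j0+1) ^ M + 2 * 0"
        by (rule tendsto_add[OF tendsto_const])
      then show ?thesis by (simp add: mult.assoc)
    qed
    moreover have "\<exists>N0. \<forall>N\<ge>N0. \<bar>d j0\<bar> * x j0 ^ M * c0 \<le> 2 * s 0 * x (j0+1) ^ M + 2 * C N * s (M+N)"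
    proof (intro exI allI impI)
      fix N :: nat
      have "\<bar>d j0\<bar> * x j0 ^ M * c0 \<le> \<bar>d j0\<bar> * x j0 ^ M * P N"
        using Pge[of N] xpos[of j0] by (intro mult_left_mono) auto
      then show "\<bar>d j0\<bar> * x j0 ^ M * c0 \<le> 2 * s 0 * x (j0+1) ^ M + 2 * C N * s (M+N)"
        using key[of M N] by linarith
    qed
    ultimately have "\<bar>d j0\<bar> * x j0 ^ M * c0 \<le> 2 * s 0 * x (j0+1) ^ M + 2 * 0"
      by (rule LIMSEQ_le_const)
    moreover have "x (j0+1) ^ M = x j0 ^ M * q ^ M"
      unfolding x_def using q by (simp add: power_int_add power_mult_distrib mult.commute)
    ultimately have "x j0 ^ M * (\<bar>d j0\<bar> * c0) \<le> x j0 ^ M * (2 * s 0 * q ^ M)"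
      by (simp add: algebra_simps)
    then show ?thesis using xpos[of j0] by simp
  qed
  have "(\<lambda>M. 2 * s 0 * q ^ M) \<longlonglongrightarrow> 2 * s 0 * 0"
    using q by (intro tendsto_intros LIMSEQ_power_zero) auto
  then have "\<bar>d j0\<bar> * c0 \<le> 0"
    using step2 by (intro LIMSEQ_le_const) auto
  then have "d j0 = 0" using c0pos by (simp add: mult_le_0_iff)
  then show ?thesis by (simp add: d_def)
qed



lemma qdens_formula:
  fixes q x :: real
  assumes q: "0 < q" "q < 1" and qd: "q_density q Q h" and x: "0 < x"
  shows "h x = (distr_fun Q x - distr_fun Q (q * x)) / (x * (1 - q))"
proof -
  define f where "f j = x * (1 - q) * (h (x * q ^ j) * q ^ j)" for j
  have s1: "f sums distr_fun Q x"
    using qd x unfolding q_density_def jackson_int_has_def f_def by auto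
  have s2: "(\<lambda>j. f (Suc j)) sums distr_fun Q (q * x)"
  proof -
    have "(\<lambda>j. (q * x) * (1 - q) * (h ((q * x) * q ^ j) * q ^ j)) sums distr_fun Q (q * x)"
      using qd x q unfolding q_density_def jackson_int_has_def by auto
    moreover have "(\<lambda>j. (q * x) * (1 - q) * (h ((q * x) * q ^ j) * q ^ j)) = (\<lambda>j. f (Suc j))"
      by (auto simp: f_def algebra_simps)
    ultimately show ?thesis by simp
  qed
  then have "f sums (distr_fun Q (q * x) + f 0)" by (simp add: sums_Suc_iff)
  with s1 have "distr_fun Q x = distr_fun Q (q * x) + f 0" using sums_unique2 by blast
  then have "h x * (x * (1 - q)) = distr_fun Q x - distr_fun Q (q * x)"
    by (simp add: f_def algebra_simps)
  then show ?thesis using q x by (simp add: field_simps)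
qed

lemma term_eq:
  fixes q :: real and j :: int
  assumes q: "0 < q" "q < 1" and qd: "q_density q Q h"
  shows "(1 - q) * (q powi (j * (int n + 1)) * h (q powi j))
       = (distr_fun Q (q powi j) - distr_fun Q (q powi (j + 1))) * (q powi j) ^ n"
proof -
  have xpos: "0 < q powi j" using q by simp
  have qx: "q * q powi j = q powi (j + 1)" using q by (simp add: power_int_add)
  have hx: "h (q powi j) = (distr_fun Q (q powi j) - distr_fun Q (q powi (j + 1))) / (q powi j * (1 - q))"
    using qdens_formula[OF q qd xpos] qx by simp
  have "q powi (j * (int n + 1)) = (q powi j) ^ (n + 1)"
    by (metis power_int_mult power_int_of_nat of_nat_Suc Suc_eq_plus1 add.commute)
  moreover have "(1 - q) * (q powi j * h (q powi j)) = distr_fun Q (q powi j) - distr_fun Q (q powi (j + 1))"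
    using hx xpos q by (simp add: field_simps)
  moreover have "(1 - q) * ((q powi j) ^ (n + 1) * h (q powi j)) = ((1 - q) * (q powi j * h (q powi j))) * (q powi j) ^ n"
    by (simp add: algebra_simps)
  ultimately show ?thesis by simp
qed



lemma fin_sum_bound:
  fixes P :: "real measure" and q :: real
  assumes rd: "real_distribution P" and ae: "AE x in P. x \<ge> 0" and int: "integrable P (\<lambda>x. x^n)"
    and q: "0 < q" "q < 1" and J: "finite J"
  shows "(\<Sum>j\<in>J. (distr_fun P (q powi j) - distr_fun P (q powi (j+1))) * (q powi j)^n) \<le> (\<integral>x. x^n \<partial>P) / q^n"
proof -
  interpret real_distribution P by fact
  define I where "I j = {q powi (j+1) <.. q powi j}" for j :: int
  have lt: "q powi (j+1) < q powi j" for j using q by (intro power_int_strict_decreasing) auto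
  have diff: "distr_fun P (q powi j) - distr_fun P (q powi (j+1)) = measure P (I j)" for j
    using cdf_diff_eq[OF lt[of j]] unfolding distr_fun_def cdf_def I_def by simp
  have integ: "integrable P (\<lambda>x. indicator (I j) x * (q powi j)^n)" for j
    by (intro integrable_mult_left integrable_real_indicator) (auto simp: I_def less_top[symmetric])
  have disj: "j = k" if "x \<in> I j" "x \<in> I k" for x j k
  proof (rule ccontr)
    assume "j \<noteq> k"
    then consider "j + 1 \<le> k" | "k + 1 \<le> j" by linarith
    then show False
    proof cases
      case 1
      then have "q powi k \<le> q powi (j+1)" using q by (intro power_int_decreasing) auto
      then show False using that by (auto simp: I_def)
    next
      case 2
      then have "q powi j \<le> q powi (k+1)" using q by (intro power_int_decreasing) auto
      then show False using that by (auto simp: I_def)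
    qed
  qed
  have "(\<Sum>j\<in>J. (distr_fun P (q powi j) - distr_fun P (q powi (j+1))) * (q powi j)^n)
      = (\<Sum>j\<in>J. (\<integral>x. indicator (I j) x * (q powi j)^n \<partial>P))"
    by (simp add: diff)
  also have "\<dots> = (\<integral>x. (\<Sum>j\<in>J. indicator (I j) x * (q powi j)^n) \<partial>P)"
    by (subst Bochner_Integration.integral_sum) (use integ in blast)+
  also have "\<dots> \<le> (\<integral>x. x^n / q^n \<partial>P)"
  proof (rule integral_mono_AE)
    show "integrable P (\<lambda>x. \<Sum>j\<in>J. indicator (I j) x * (q powi j)^n)"
      using integ by auto
    show "integrable P (\<lambda>x. x^n / q^n)" using int by auto
    show "AE x in P. (\<Sum>j\<in>J. indicator (I j) x * (q powi j)^n) \<le> x^n / q^n"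
      using ae
    proof eventually_elim
      case (elim x)
      show ?case
      proof (cases "\<exists>j1\<in>J. x \<in> I j1")
        case True
        then obtain j1 where j1: "j1 \<in> J" "x \<in> I j1" by blast
        have "(\<Sum>j\<in>J. indicator (I j) x * (q powi j)^n) = indicator (I j1) x * (q powi j1)^n + (\<Sum>j\<in>J - {j1}. indicator (I j) x * (q powi j)^n)"
          by (rule sum.remove[OF J j1(1)])
        also have "(\<Sum>j\<in>J - {j1}. indicator (I j) x * (q powi j)^n) = 0"
          using disj j1 by (intro sum.neutral) (auto simp: indicator_def)
        finally have eq: "(\<Sum>j\<in>J. indicator (I j) x * (q powi j)^n) = (q powi j1)^n"
          using j1 by simp
        have "q * q powi j1 = q powi (j1+1)" using q by (simp add: power_int_add)
        then have "q * q powi j1 < x" using j1 by (simp add: I_def)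
        then have "q powi j1 \<le> x / q" using q by (simp add: field_simps)
        then have "(q powi j1)^n \<le> (x / q)^n" using q by (intro power_mono) auto
        then show ?thesis using eq by (simp add: power_divide)
      next
        case False
        then have "(\<Sum>j\<in>J. indicator (I j) x * (q powi j)^n) = 0"
          by (intro sum.neutral) (auto simp: indicator_def)
        then show ?thesis using elim q by simp
      qed
    qed
  qed
  also have "\<dots> = (\<integral>x. x^n \<partial>P) / q^n" by simp
  finally show ?thesis .
qed



theorem proposition4:
  fixes P :: "real measure" and q0 :: real
  assumes "prob_space P"
    and "sets P = sets borel"
    and "absolutely_continuous lborel P"
    and "AE x in P. x \<ge> 0"
    and "\<forall>n::nat. integrable P (\<lambda>x. x ^ n)"
    and "0 < q0" and "q0 \<le> 1"
    and "limsup (\<lambda>n::nat. ereal (ln (\<integral>x. x ^ n \<partial>P) / (real n)\<^sup>2)) = ereal (ln (1 / q0) / 2)"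
  shows "\<forall>q. 0 < q \<and> q < q0 \<longrightarrow> q_moment_determinate q P"
proof (intro allI impI)
  fix q :: real
  assume qq: "0 < q \<and> q < q0"
  then have q: "0 < q" "q < 1" using assms(7) by auto
  have rd: "real_distribution P" using assms(1,2) by (simp add: real_distribution_def real_distribution_axioms_def)
  interpret real_distribution P by fact
  define F where "F = distr_fun P"
  have F_cdf: "F x = cdf P x" for x by (simp add: F_def distr_fun_def cdf_def)
  define f where "f t = (F t - F (q * t)) / (t * (1 - q))" for t
  define a where "a j = F (q powi j) - F (q powi (j + 1))" for j
  define \<mu> where "\<mu> n = (\<integral>x. x ^ n \<partial>P)" for n
  have F0: "F 0 = 0"
  proof -
    have "AE x in lborel. x \<noteq> (0::real)" by (rule AE_lborel_singleton)
    then have "AE x in P. x \<noteq> (0::real)"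
      using absolutely_continuous_AE[OF _ assms(3)] assms(2) by auto
    with assms(4) have "AE x in P. x \<notin> {..0}" by eventually_elim auto
    then have "prob {..0} = 0" by (subst prob_eq_0) auto
    then show ?thesis by (simp add: F_cdf cdf_def)
  qed
  have qd: "q_density q P f"
    unfolding q_density_def jackson_int_has_def
  proof (intro allI impI)
    fix x :: real assume x: "0 < x"
    have tl: "(\<lambda>j. F (x * q ^ j)) \<longlonglongrightarrow> 0"
    proof -
      have "(F \<longlongrightarrow> F 0) (at_right 0)"
        using cdf_is_right_cont[of 0] unfolding F_cdf[abs_def] continuous_within by simp
      moreover have "filterlim (\<lambda>j. x * q ^ j) (at_right 0) sequentially"
      proof (rule tendsto_imp_filterlim_at_right)
        show "(\<lambda>j. x * q ^ j) \<longlonglongrightarrow> 0"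
          using q by (intro tendsto_mult_right_zero LIMSEQ_power_zero) auto
        show "\<forall>\<^sub>F j in sequentially. 0 < x * q ^ j" using x q by simp
      qed
      ultimately show ?thesis using F0 by (metis filterlim_compose)
    qed
    have "(\<lambda>j. - (F (x * q ^ Suc j) - F (x * q ^ j))) sums (- (0 - F (x * q ^ 0)))"
      by (intro sums_minus telescope_sums tl)
    moreover have "x * (1 - q) * (f (x * q ^ j) * q ^ j) = - (F (x * q ^ Suc j) - F (x * q ^ j))" for j
    proof -
      define y where "y = x * q ^ j"
      have y: "0 < y" using x q by (simp add: y_def)
      have "x * (1 - q) * (f (x * q ^ j) * q ^ j) = (y * (1 - q)) * f y"
        by (simp add: y_def algebra_simps)
      also have "\<dots> = F y - F (q * y)"
        unfolding f_def using y q by simp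
      also have "q * y = x * q ^ Suc j" by (simp add: y_def algebra_simps)
      finally show ?thesis by (simp add: y_def)
    qed
    ultimately show "(\<lambda>j. x * (1 - q) * (f (x * q ^ j) * q ^ j)) sums distr_fun P x"
      by (simp add: F_def)
  qed
  have anneg: "0 \<le> a j" for j
  proof -
    have "q powi (j+1) \<le> q powi j" using q by (intro power_int_decreasing) auto
    then show ?thesis unfolding a_def F_cdf by (simp add: cdf_nondecreasing)
  qed
  have tq: "(1 - q) * (q powi (j * (int n + 1)) * f (q powi j)) = a j * (q powi j) ^ n" for n j
    using term_eq[OF q qd] unfolding a_def F_def .
  have finb: "(\<Sum>j\<in>J. a j * (q powi j) ^ n) \<le> \<mu> n / q ^ n" if "finite J" for J n
    using fin_sum_bound[OF rd assms(4) _ q that] assms(5) unfolding a_def F_def \<mu>_def by blast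
  have summ: "(\<lambda>j. a j * (q powi j) ^ n) summable_on UNIV" for n
  proof (rule nonneg_bdd_above_summable_on)
    show "0 \<le> a j * (q powi j) ^ n" for j using anneg[of j] q by simp
    show "bdd_above (sum (\<lambda>j. a j * (q powi j) ^ n) ` {J. J \<subseteq> UNIV \<and> finite J})"
      using finb by (intro bdd_aboveI[of _ "\<mu> n / q ^ n"]) auto
  qed
  define s where "s n = (\<Sum>\<^sub>\<infinity>j. a j * (q powi j) ^ n)" for n
  have ha: "((\<lambda>j. a j * (q powi j) ^ n) has_sum s n) UNIV" for n
    unfolding s_def using summ by (rule has_sum_infsum)
  have qmf: "q_moments_finite q f"
    unfolding q_moments_finite_def q_moment_has_def tq using ha by blast
  have qm: "q_moment q f k = s k" for k
    unfolding q_moment_def tq s_def ..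
  have s_nn: "0 \<le> s n" for n
    unfolding s_def using anneg q by (intro infsum_nonneg) simp
  have s_le: "s n \<le> \<mu> n / q ^ n" for n
    unfolding s_def using summ finb by (intro infsum_le_finite_sums) auto
  define L0 where "L0 = ln (1 / q0)"
  define L where "L = ln (1 / q)"
  define \<beta> where "\<beta> = (L0 + L) / 4"
  have LL: "L0 < L" unfolding L0_def L_def using qq q by (simp add: ln_div)
  have Lq: "L = - ln q" unfolding L_def using q by (simp add: ln_div)
  have ev: "eventually (\<lambda>n. \<mu> n \<le> exp (\<beta> * real n ^ 2)) sequentially"
  proof -
    have "limsup (\<lambda>n::nat. ereal (ln (\<mu> n) / (real n)\<^sup>2)) < ereal \<beta>"
      using assms(8) LL unfolding \<mu>_def L0_def \<beta>_def by simp
    then have "eventually (\<lambda>n. ereal (ln (\<mu> n) / (real n)\<^sup>2) < ereal \<beta>) sequentially"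
      by (rule Limsup_lessD)
    moreover have "eventually (\<lambda>n::nat. n \<ge> 1) sequentially" by (rule eventually_ge_at_top)
    ultimately show ?thesis
    proof eventually_elim
      case (elim n)
      then have "ln (\<mu> n) < \<beta> * real n ^ 2" by (simp add: divide_less_eq)
      show ?case
      proof (cases "\<mu> n > 0")
        case True
        then have "\<mu> n = exp (ln (\<mu> n))" by simp
        also have "\<dots> \<le> exp (\<beta> * real n ^ 2)" using \<open>ln (\<mu> n) < \<beta> * real n ^ 2\<close> by simp
        finally show ?thesis .
      next
        case False
        moreover have "0 < exp (\<beta> * real n ^ 2)" by simp
        ultimately show ?thesis by linarith
      qed
    qed
  qed
  have cond: "(\<lambda>n. s n * q powr (real n ^ 2 / 2 + u * real n + v)) \<longlonglongrightarrow> 0" for u v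
  proof (rule tendsto_sandwich[of "\<lambda>_. 0" _ _ "\<lambda>n. exp ((\<beta> + ln q / 2) * real n ^ 2 + (u * ln q - ln q) * real n + v * ln q)"])
    show "\<forall>\<^sub>F n in sequentially. 0 \<le> s n * q powr (real n ^ 2 / 2 + u * real n + v)"
      using s_nn by simp
    show "\<forall>\<^sub>F n in sequentially. s n * q powr (real n ^ 2 / 2 + u * real n + v)
          \<le> exp ((\<beta> + ln q / 2) * real n ^ 2 + (u * ln q - ln q) * real n + v * ln q)"
      using ev
    proof eventually_elim
      case (elim n)
      have qn: "q ^ n = exp (real n * ln q)" using q by (simp add: exp_of_nat_mult)
      have "s n * q powr (real n ^ 2 / 2 + u * real n + v) \<le> \<mu> n / q ^ n * q powr (real n ^ 2 / 2 + u * real n + v)"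
        using s_le[of n] by (intro mult_right_mono) auto
      also have "\<dots> \<le> exp (\<beta> * real n ^ 2) / q ^ n * q powr (real n ^ 2 / 2 + u * real n + v)"
        using elim q by (intro mult_right_mono divide_right_mono) auto
      also have "\<dots> = exp (\<beta> * real n ^ 2 - real n * ln q + (real n ^ 2 / 2 + u * real n + v) * ln q)"
        using q by (simp add: qn powr_def exp_diff exp_add)
      also have "\<beta> * real n ^ 2 - real n * ln q + (real n ^ 2 / 2 + u * real n + v) * ln q
          = (\<beta> + ln q / 2) * real n ^ 2 + (u * ln q - ln q) * real n + v * ln q"
        by (simp add: algebra_simps)
      finally show ?case .
    qed
    show "(\<lambda>n. exp ((\<beta> + ln q / 2) * real n ^ 2 + (u * ln q - ln q) * real n + v * ln q)) \<longlonglongrightarrow> 0"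
    proof (rule exp_quad_tendsto)
      have "\<beta> + ln q / 2 = (L0 - L) / 4" unfolding \<beta>_def using Lq by (simp add: field_simps)
      then show "\<beta> + ln q / 2 < 0" using LL by simp
    qed
  qed simp
  show "q_moment_determinate q P"
    unfolding q_moment_determinate_def
  proof (intro exI conjI allI impI)
    show "q_density q P f" by (rule qd)
    show "q_moments_finite q f" by (rule qmf)
    fix Q :: "real measure" and g :: "real \<Rightarrow> real" and j :: int
    assume H: "prob_space Q \<and> sets Q = sets borel \<and> q_density q Q g \<and> (\<forall>k. q_moment_has q g k (q_moment q f k))"
    then have rdQ: "real_distribution Q" by (simp add: real_distribution_def real_distribution_axioms_def)
    have qdQ: "q_density q Q g" using H by blast
    define b where "b j = distr_fun Q (q powi j) - distr_fun Q (q powi (j + 1))" for j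
    have bnneg: "0 \<le> b j" for j
    proof -
      have "q powi (j+1) \<le> q powi j" using q by (intro power_int_decreasing) auto
      then show ?thesis unfolding b_def distr_fun_def
        using finite_borel_measure.cdf_nondecreasing[OF real_distribution.finite_borel_measure_M[OF rdQ]] by (simp add: cdf_def)
    qed
    have hb: "((\<lambda>j. b j * (q powi j) ^ n) has_sum s n) UNIV" for n
    proof -
      have "q_moment_has q g n (s n)" using H qm by metis
      then show ?thesis unfolding q_moment_has_def term_eq[OF q qdQ] b_def .
    qed
    have abj: "a j = b j" by (rule core[OF q anneg bnneg ha hb cond])
    have qx: "q * q powi j = q powi (j + 1)" using q by (simp add: power_int_add)
    moreover have "f (q powi j) = a j / (q powi j * (1 - q))"
      using qdens_formula[OF q qd, of "q powi j"] q qx unfolding a_def F_def by simp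
    moreover have "g (q powi j) = b j / (q powi j * (1 - q))"
      using qdens_formula[OF q qdQ, of "q powi j"] q qx unfolding b_def by simp
    ultimately show "f (q powi j) = g (q powi j)" using abj by simp
  qed
qed


end
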